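(* Let $\bar\rho>0$, $\bar\theta>0$, $R>0$, $c_v>0$, $\nu_0>0$, $k_0>0$ be constants, $b=\bar\theta/c_v$, and for $\xi\in\mathbb{R}$ let \[ A(\xi)=\begin{pmatrix}0&\bar\rho i\xi&0\\ \frac{R\bar\theta}{\bar\rho}i\xi&-\nu_0\xi^2&Ri\xi\\ 0&\frac{R\bar\theta}{c_v}i\xi&-k_0\xi^2\end{pmatrix}. \] Then for every $\xi\in\mathbb{R}$ all eigenvalues of $A(\xi)$ have non-positive real part. Moreover there exists $\xi_0=\xi_0(R,\bar\theta,\nu_0,k_0,b)>0$ such that for $|\xi|\ge\xi_0$ one can choose an eigenvalue $-\delta(\xi)$ of $A(\xi)$ satisfying \[ \lim_{|\xi|\to\infty}\delta(\xi)=\omega_0,\qquad \omega_0=\frac{R\bar\theta}{\nu_0}. \]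
   Context: $A(\xi)$ is the Fourier symbol of the adjoint of the one-dimensional compressible non-barotropic Navier–Stokes system linearized around $(\bar\rho,0,\bar\theta)$, with $\nu_0=(\lambda+2\mu)/\bar\rho$ and $k_0=\kappa/(\bar\rho c_v)$. *)

theory Defs
  imports "HOL-Analysis.Analysis" "Jordan_Normal_Form.Char_Poly"
begin

text \<open>Fourier symbol A(xi) of the adjoint linearized 1D compressible
  non-barotropic Navier--Stokes system (3x3 complex matrix).
  Parameters: rho = rho-bar, th = theta-bar, R, cv, nu0, k0.\<close>
definition NS_symbol ::
  "real \<Rightarrow> real \<Rightarrow> real \<Rightarrow> real \<Rightarrow> real \<Rightarrow> real \<Rightarrow> real \<Rightarrow> complex mat" where
  "NS_symbol rho th R cv nu0 k0 \<xi> = mat_of_rows_list 3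
     [ [0, complex_of_real rho * \<i> * complex_of_real \<xi>, 0],
       [complex_of_real (R * th / rho) * \<i> * complex_of_real \<xi>,
        - complex_of_real (nu0 * \<xi>\<^sup>2),
        complex_of_real R * \<i> * complex_of_real \<xi>],
       [0, complex_of_real (R * th / cv) * \<i> * complex_of_real \<xi>,
        - complex_of_real (k0 * \<xi>\<^sup>2)] ]"

end

theory Submission imports Defs begin

lemma comp:
  assumes "v \<in> carrier_vec 3"
  shows "NS_symbol rho th R cv nu0 k0 \<xi> *\<^sub>v v = vec 3 (\<lambda>i. if i = 0 then complex_of_real rho * \<i> * complex_of_real \<xi> * v$1
     else if i = 1 then complex_of_real (R * th / rho) * \<i> * complex_of_real \<xi> * v$0 - complex_of_real (nu0 * \<xi>\<^sup>2) * v$1 + complex_of_real R * \<i> * complex_of_real \<xi> * v$2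
     else complex_of_real (R * th / cv) * \<i> * complex_of_real \<xi> * v$1 - complex_of_real (k0 * \<xi>\<^sup>2) * v$2)"
  apply (rule eq_vecI)
  using assms
  apply (auto simp: NS_symbol_def mat_of_rows_list_def scalar_prod_def numeral_3_eq_3 numeral_2_eq_2 less_Suc_eq)
  done

lemma dimA: "dim_row (NS_symbol rho th R cv nu0 k0 \<xi>) = 3"
  by (simp add: NS_symbol_def mat_of_rows_list_def)

lemma eig_elim:
  assumes "eigenvalue (NS_symbol rho th R cv nu0 k0 \<xi>) mu"
  shows "\<exists>x y z. (x \<noteq> 0 \<or> y \<noteq> 0 \<or> z \<noteq> 0)
    \<and> complex_of_real rho * \<i> * complex_of_real \<xi> * y = mu * x
    \<and> complex_of_real (R * th / rho) * \<i> * complex_of_real \<xi> * x - complex_of_real (nu0 * \<xi>\<^sup>2) * y + complex_of_real R * \<i> * complex_of_real \<xi> * z = mu * y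
    \<and> complex_of_real (R * th / cv) * \<i> * complex_of_real \<xi> * y - complex_of_real (k0 * \<xi>\<^sup>2) * z = mu * z"
proof -
  obtain v where v: "v \<in> carrier_vec 3" "v \<noteq> 0\<^sub>v 3" "NS_symbol rho th R cv nu0 k0 \<xi> *\<^sub>v v = mu \<cdot>\<^sub>v v"
    using assms unfolding eigenvalue_def eigenvector_def dimA by blast
  have nz: "v$0 \<noteq> 0 \<or> v$1 \<noteq> 0 \<or> v$2 \<noteq> 0"
  proof (rule ccontr)
    assume "\<not> ?thesis"
    hence "v = 0\<^sub>v 3" using v(1) by (intro eq_vecI) (auto simp: numeral_3_eq_3 numeral_2_eq_2 less_Suc_eq)
    thus False using v(2) by simp
  qed
  have e: "\<And>i. i < 3 \<Longrightarrow> (NS_symbol rho th R cv nu0 k0 \<xi> *\<^sub>v v) $ i = (mu \<cdot>\<^sub>v v) $ i"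
    using v(3) by simp
  note e' = e[unfolded comp[OF v(1)]]
  show ?thesis
    apply (rule exI[of _ "v$0"], rule exI[of _ "v$1"], rule exI[of _ "v$2"])
    using nz e'[of 0] e'[of 1] e'[of 2] v(1) by (auto simp: mult.commute)
qed

lemma eig_intro:
  assumes "x \<noteq> 0 \<or> y \<noteq> 0 \<or> z \<noteq> 0"
    "complex_of_real rho * \<i> * complex_of_real \<xi> * y = mu * x"
    "complex_of_real (R * th / rho) * \<i> * complex_of_real \<xi> * x - complex_of_real (nu0 * \<xi>\<^sup>2) * y + complex_of_real R * \<i> * complex_of_real \<xi> * z = mu * y"
    "complex_of_real (R * th / cv) * \<i> * complex_of_real \<xi> * y - complex_of_real (k0 * \<xi>\<^sup>2) * z = mu * z"
  shows "eigenvalue (NS_symbol rho th R cv nu0 k0 \<xi>) mu"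
proof -
  define v where "v = vec 3 (\<lambda>i. if i = 0 then x else if i = 1 then y else z)"
  have vc: "v \<in> carrier_vec 3" by (simp add: v_def)
  have "v \<noteq> 0\<^sub>v 3"
  proof
    assume "v = 0\<^sub>v 3"
    hence "v$0 = 0" "v$1 = 0" "v$2 = 0" by auto
    thus False using assms(1) by (simp add: v_def)
  qed
  moreover have "NS_symbol rho th R cv nu0 k0 \<xi> *\<^sub>v v = mu \<cdot>\<^sub>v v"
    unfolding comp[OF vc]
    apply (rule eq_vecI)
    using assms(2-4) by (auto simp: v_def mult.commute)
  ultimately show ?thesis unfolding eigenvalue_def eigenvector_def dimA using vc by blast
qed

lemma re_nonpos:
  fixes rho th R cv nu0 k0 \<xi> :: real
  assumes pos: "rho > 0" "th > 0" "R > 0" "cv > 0" "nu0 > 0" "k0 > 0"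
  assumes "x \<noteq> 0 \<or> y \<noteq> 0 \<or> z \<noteq> 0"
    and e1: "complex_of_real rho * \<i> * complex_of_real \<xi> * y = mu * x"
    and e2: "complex_of_real (R * th / rho) * \<i> * complex_of_real \<xi> * x - complex_of_real (nu0 * \<xi>\<^sup>2) * y + complex_of_real R * \<i> * complex_of_real \<xi> * z = mu * y"
    and e3: "complex_of_real (R * th / cv) * \<i> * complex_of_real \<xi> * y - complex_of_real (k0 * \<xi>\<^sup>2) * z = mu * z"
  shows "Re mu \<le> 0"
proof -
  have key: "\<And>w. Re (cnj w * (mu * w)) = Re mu * (cmod w)^2"
    by (simp add: cmod_power2) (simp add: algebra_simps power2_eq_square)
  define w1 where "w1 = R * th / rho^2"
  define w3 where "w3 = cv / th"
  have w1: "w1 > 0" and w3: "w3 > 0" using pos by (auto simp: w1_def w3_def)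
  have "Re mu * (w1 * (cmod x)^2 + (cmod y)^2 + w3 * (cmod z)^2)
     = w1 * Re (cnj x * (mu * x)) + Re (cnj y * (mu * y)) + w3 * Re (cnj z * (mu * z))"
    by (simp only: key) (simp add: algebra_simps)
  also have "\<dots> = - (nu0 * \<xi>^2 * (cmod y)^2 + w3 * k0 * \<xi>^2 * (cmod z)^2)"
    unfolding e1[symmetric] e2[symmetric] e3[symmetric] using pos
    by (simp add: cmod_power2) (simp add: w1_def w3_def field_simps power2_eq_square)
  finally have eq: "Re mu * (w1 * (cmod x)^2 + (cmod y)^2 + w3 * (cmod z)^2) = - (nu0 * \<xi>^2 * (cmod y)^2 + w3 * k0 * \<xi>^2 * (cmod z)^2)" .
  have S: "w1 * (cmod x)^2 + (cmod y)^2 + w3 * (cmod z)^2 > 0"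
  proof -
    have a: "0 \<le> w1*(cmod x)^2" "0 \<le> (cmod y)^2" "0 \<le> w3*(cmod z)^2" using w1 w3 by simp_all
    have b: "x \<noteq> 0 \<Longrightarrow> 0 < w1*(cmod x)^2" "y \<noteq> 0 \<Longrightarrow> 0 < (cmod y)^2" "z \<noteq> 0 \<Longrightarrow> 0 < w3*(cmod z)^2"
      using w1 w3 by simp_all
    show ?thesis using a b assms(7) by linarith
  qed
  have "- (nu0 * \<xi>^2 * (cmod y)^2 + w3 * k0 * \<xi>^2 * (cmod z)^2) \<le> 0" using pos w3
    by (intro neg_le_0_iff_le[THEN iffD2] add_nonneg_nonneg mult_nonneg_nonneg) auto
  with eq S show ?thesis by (metis mult_pos_pos not_le)
qed

lemma root_eig:
  fixes rho th R cv nu0 k0 \<xi> s :: real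
  assumes pos: "rho > 0" "th > 0" "R > 0" "cv > 0" "nu0 > 0" "k0 > 0"
    and s: "s > 0" "k0 * \<xi>^2 > s"
    and F: "s^3 - (nu0+k0) * \<xi>^2 * s^2 + (nu0*k0*(\<xi>^2)^2 + (R*R*th/cv + R*th)*\<xi>^2)* s - R*th*k0*(\<xi>^2)^2 = 0"
  shows "eigenvalue (NS_symbol rho th R cv nu0 k0 \<xi>) (- complex_of_real s)"
proof -
  define mu where "mu = - complex_of_real s"
  define x where "x = complex_of_real rho * \<i> * complex_of_real \<xi> * (mu + complex_of_real (k0*\<xi>^2))"
  define y where "y = mu * (mu + complex_of_real (k0*\<xi>^2))"
  define z where "z = complex_of_real (R * th / cv) * \<i> * complex_of_real \<xi> * mu"
  have yne: "y \<noteq> 0"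
  proof -
    have "mu + complex_of_real (k0*\<xi>^2) = complex_of_real (k0*\<xi>^2 - s)" by (simp add: mu_def)
    moreover have "complex_of_real (k0*\<xi>^2 - s) \<noteq> 0" using s by (simp only: of_real_eq_0_iff)
    moreover have "mu \<noteq> 0" using s by (simp add: mu_def)
    ultimately show ?thesis unfolding y_def by (metis mult_eq_0_iff)
  qed
  have e1: "complex_of_real rho * \<i> * complex_of_real \<xi> * y = mu * x"
    by (simp add: x_def y_def algebra_simps)
  have e3: "complex_of_real (R * th / cv) * \<i> * complex_of_real \<xi> * y - complex_of_real (k0 * \<xi>\<^sup>2) * z = mu * z"
    by (simp add: z_def y_def algebra_simps)
  have e2: "complex_of_real (R * th / rho) * \<i> * complex_of_real \<xi> * x - complex_of_real (nu0 * \<xi>\<^sup>2) * y + complex_of_real R * \<i> * complex_of_real \<xi> * z = mu * y"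
  proof -
    have d: "complex_of_real (R * th / rho) * \<i> * complex_of_real \<xi> * x - complex_of_real (nu0 * \<xi>\<^sup>2) * y + complex_of_real R * \<i> * complex_of_real \<xi> * z - mu * y
      = complex_of_real (s^3 - (nu0+k0) * \<xi>^2 * s^2 + (nu0*k0*(\<xi>^2)^2 + (R*R*th/cv + R*th)*\<xi>^2)* s - R*th*k0*(\<xi>^2)^2)"
      using pos by (simp add: x_def y_def z_def mu_def complex_eq_iff field_simps power2_eq_square power3_eq_cube)
    show ?thesis using d F by (metis of_real_0 right_minus_eq)
  qed
  show ?thesis unfolding mu_def[symmetric] using eig_intro[OF _ e1 e2 e3] yne by blast
qed

lemma err_bound:
  fixes a P t s M :: real
  assumes "1 \<le> t" "0 \<le> s" "s \<le> M" "0 \<le> a" "0 \<le> P"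
  shows "\<bar>s^3 - a*t* s^2 + P*t* s\<bar> \<le> (M^3 + a*M^2 + P*M) * t"
proof -
  have M: "0 \<le> M" using assms by linarith
  have "s^3 \<le> M^3" using assms by (simp add: power_mono)
  also have "\<dots> \<le> M^3 * t" using assms M by (simp add: mult_le_cancel_left1)
  finally have h1: "\<bar>s^3\<bar> \<le> M^3 * t" using assms by simp
  have "s^2 \<le> M^2" using assms by (simp add: power_mono)
  hence hh: "a*t* s^2 \<le> a*t*M^2" using mult_left_mono[of "s^2" "M^2" "a*t"] assms by simp
  have "\<bar>a*t* s^2\<bar> = a*t* s^2" using assms by simp
  hence h2: "\<bar>a*t* s^2\<bar> \<le> a*M^2*t" using hh by (simp add: algebra_simps)
  have h3a: "P*t* s \<le> P*t*M" using mult_left_mono[of s M "P*t"] assms by simp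
  have "\<bar>P*t* s\<bar> = P*t* s" using assms by simp
  hence h3: "\<bar>P*t* s\<bar> \<le> P*M*t" using h3a by (simp add: algebra_simps)
  have "\<bar>s^3 - a*t* s^2 + P*t* s\<bar> \<le> \<bar>s^3\<bar> + \<bar>a*t* s^2\<bar> + \<bar>P*t* s\<bar>" by linarith
  also have "\<dots> \<le> (M^3 + a*M^2 + P*M) * t" using h1 h2 h3 by (simp add: algebra_simps)
  finally show ?thesis .
qed

theorem lemma2p5:
  fixes rho th R cv nu0 k0 :: real
  assumes "rho > 0" "th > 0" "R > 0" "cv > 0" "nu0 > 0" "k0 > 0"
  shows "(\<forall>\<xi> :: real. \<forall>mu. eigenvalue (NS_symbol rho th R cv nu0 k0 \<xi>) mu \<longrightarrow> Re mu \<le> 0)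
       \<and> (\<exists>\<xi>0 > 0. \<exists>\<delta> :: real \<Rightarrow> complex.
            (\<forall>\<xi>. \<bar>\<xi>\<bar> \<ge> \<xi>0 \<longrightarrow> eigenvalue (NS_symbol rho th R cv nu0 k0 \<xi>) (- \<delta> \<xi>))
          \<and> (\<delta> \<longlongrightarrow> complex_of_real (R * th / nu0)) at_infinity)"
proof (intro conjI allI impI)
  fix \<xi> :: real and mu
  assume "eigenvalue (NS_symbol rho th R cv nu0 k0 \<xi>) mu"
  then obtain x y z where "(x \<noteq> 0 \<or> y \<noteq> 0 \<or> z \<noteq> 0)"
    "complex_of_real rho * \<i> * complex_of_real \<xi> * y = mu * x"
    "complex_of_real (R * th / rho) * \<i> * complex_of_real \<xi> * x - complex_of_real (nu0 * \<xi>\<^sup>2) * y + complex_of_real R * \<i> * complex_of_real \<xi> * z = mu * y"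
    "complex_of_real (R * th / cv) * \<i> * complex_of_real \<xi> * y - complex_of_real (k0 * \<xi>\<^sup>2) * z = mu * z"
    using eig_elim[OF \<open>eigenvalue (NS_symbol rho th R cv nu0 k0 \<xi>) mu\<close>] by (elim exE conjE) (rule that)
  from re_nonpos[OF assms this] show "Re mu \<le> 0" .
next
  define w where "w = R*th/nu0"
  define M where "M = 2*w"
  define P where "P = R*R*th/cv + R*th"
  define K where "K = M^3 + (nu0+k0)*M^2 + P*M"
  define c where "c = k0*R*th"
  define F where "F = (\<lambda>t s::real. s^3 - (nu0+k0) * t * s^2 + (nu0*k0*t^2 + P*t) * s - R*th*k0*t^2)"
  define x0 where "x0 = max 1 (max (4*K/c) (4*w/k0))"
  have w: "w > 0" using assms by (simp add: w_def)
  have nw: "nu0 * w = R*th" using assms by (simp add: w_def)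
  have M: "M > 0" using w by (simp add: M_def)
  have P: "P > 0" using assms unfolding P_def by (intro add_pos_pos) simp_all
  have K: "K > 0" using M P assms by (simp add: K_def add_pos_pos)
  have c: "c > 0" using assms by (simp add: c_def)
  have x0: "x0 \<ge> 1" "x0 \<ge> 4*K/c" "x0 \<ge> 4*w/k0" by (simp_all add: x0_def)
  have dec: "\<And>t s. F t s = t^2*k0*(nu0* s - R*th) + (s^3 - (nu0+k0)*t* s^2 + P*t* s)"
    by (simp add: F_def algebra_simps power2_eq_square)
  have bnd: "\<And>t s. 1 \<le> t \<Longrightarrow> 0 \<le> s \<Longrightarrow> s \<le> M \<Longrightarrow> \<bar>F t s - t^2*k0*(nu0* s - R*th)\<bar> \<le> K*t"
  proof -
    fix t s :: real assume "1 \<le> t" "0 \<le> s" "s \<le> M"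
    from err_bound[OF this, of "nu0+k0" P] assms P
    show "\<bar>F t s - t^2*k0*(nu0* s - R*th)\<bar> \<le> K*t" by (simp add: dec K_def)
  qed
  have tge: "\<And>\<xi>::real. \<bar>\<xi>\<bar> \<ge> x0 \<Longrightarrow> \<xi>^2 \<ge> \<bar>\<xi>\<bar> \<and> \<xi>^2 \<ge> 1"
  proof -
    fix \<xi> :: real assume h: "\<bar>\<xi>\<bar> \<ge> x0"
    hence "\<bar>\<xi>\<bar> \<ge> 1" using x0 by linarith
    hence "\<bar>\<xi>\<bar> * 1 \<le> \<bar>\<xi>\<bar> * \<bar>\<xi>\<bar>" by (intro mult_left_mono) auto
    thus "\<xi>^2 \<ge> \<bar>\<xi>\<bar> \<and> \<xi>^2 \<ge> 1" using \<open>\<bar>\<xi>\<bar> \<ge> 1\<close> by (simp add: power2_eq_square abs_mult_self_eq)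
  qed
  have ex: "\<And>\<xi>::real. \<bar>\<xi>\<bar> \<ge> x0 \<Longrightarrow> \<exists>s. w/2 \<le> s \<and> s \<le> M \<and> F (\<xi>^2) s = 0"
  proof -
    fix \<xi> :: real assume h: "\<bar>\<xi>\<bar> \<ge> x0"
    define t where "t = \<xi>^2"
    have t1: "t \<ge> 1" and tx: "t \<ge> x0" using tge[OF h] h unfolding t_def by linarith+
    have "4*K/c \<le> t" using x0 tx by linarith
    hence "4*K \<le> t*c" using c by (simp add: pos_divide_le_eq)
    hence Kt: "K*t \<le> t^2*c/4" using t1 mult_left_mono[of "4*K" "t*c" t]
      by (simp add: power2_eq_square algebra_simps)
    have tc: "t^2*c > 0" using c t1 by simp
    have "F t (w/2) \<le> t^2*k0*(nu0*(w/2) - R*th) + K*t"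
      using bnd[OF t1, of "w/2"] w M by (simp add: M_def abs_le_iff)
    also have "t^2*k0*(nu0*(w/2) - R*th) = -(t^2*c/2)" using nw by (simp add: c_def algebra_simps)
    finally have f1: "F t (w/2) \<le> 0" using Kt tc by linarith
    have "F t M \<ge> t^2*k0*(nu0*M - R*th) - K*t"
      using bnd[OF t1, of M] M by (simp add: abs_le_iff)
    moreover have "t^2*k0*(nu0*M - R*th) = t^2*c" using nw by (simp add: c_def M_def algebra_simps)
    ultimately have f2: "F t M \<ge> 0" using Kt tc by linarith
    have "\<exists>s\<ge>w/2. s \<le> M \<and> F t s = 0"
      by (rule IVT[of "F t" "w/2" 0 M]) (use f1 f2 w in \<open>auto simp: M_def F_def intro!: continuous_intros\<close>)
    thus "\<exists>s. w/2 \<le> s \<and> s \<le> M \<and> F (\<xi>^2) s = 0" unfolding t_def by blast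
  qed
  define S where "S = (\<lambda>\<xi>::real. SOME s. w/2 \<le> s \<and> s \<le> M \<and> F (\<xi>^2) s = 0)"
  have Sp: "\<And>\<xi>. \<bar>\<xi>\<bar> \<ge> x0 \<Longrightarrow> w/2 \<le> S \<xi> \<and> S \<xi> \<le> M \<and> F (\<xi>^2) (S \<xi>) = 0"
    unfolding S_def using ex by (rule someI_ex)
  show "\<exists>\<xi>0 > 0. \<exists>\<delta> :: real \<Rightarrow> complex.
            (\<forall>\<xi>. \<bar>\<xi>\<bar> \<ge> \<xi>0 \<longrightarrow> eigenvalue (NS_symbol rho th R cv nu0 k0 \<xi>) (- \<delta> \<xi>))
          \<and> (\<delta> \<longlongrightarrow> complex_of_real (R * th / nu0)) at_infinity"
  proof (intro exI conjI allI impI)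
    show "x0 > 0" using x0 by linarith
  next
    fix \<xi> :: real assume h: "\<bar>\<xi>\<bar> \<ge> x0"
    have sp: "w/2 \<le> S \<xi>" "S \<xi> \<le> M" "F (\<xi>^2) (S \<xi>) = 0" using Sp[OF h] by auto
    have "k0 * x0 \<ge> 4*w" using x0 assms by (simp add: pos_divide_le_eq mult.commute)
    moreover have "k0 * \<xi>^2 \<ge> k0 * x0" using tge[OF h] h assms by simp
    ultimately have "k0 * \<xi>^2 > S \<xi>" using sp w by (simp add: M_def)
    moreover have "S \<xi> > 0" using sp w by linarith
    ultimately show "eigenvalue (NS_symbol rho th R cv nu0 k0 \<xi>) (- (\<lambda>\<xi>. complex_of_real (S \<xi>)) \<xi>)"
      using root_eig[OF assms, of "S \<xi>" \<xi>] sp(3) by (simp add: F_def P_def)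
  next
    show "((\<lambda>\<xi>. complex_of_real (S \<xi>)) \<longlongrightarrow> complex_of_real (R * th / nu0)) at_infinity"
      unfolding Lim_at_infinity
    proof (intro allI impI)
      fix e :: real assume e: "e > 0"
      show "\<exists>b. \<forall>x. b \<le> norm x \<longrightarrow> dist (complex_of_real (S x)) (complex_of_real (R * th / nu0)) < e"
      proof (intro exI allI impI)
        fix \<xi> :: real assume h: "max x0 (2*K/(k0*nu0*e)) \<le> norm \<xi>"
        hence h0: "\<bar>\<xi>\<bar> \<ge> x0" and h1: "\<bar>\<xi>\<bar> \<ge> 2*K/(k0*nu0*e)" by auto
        define t where "t = \<xi>^2"
        define s where "s = S \<xi>"
        have sp: "w/2 \<le> s" "s \<le> M" "F t s = 0" using Sp[OF h0] by (auto simp: s_def t_def)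
        have t1: "t \<ge> 1" and tx: "t \<ge> \<bar>\<xi>\<bar>" using tge[OF h0] unfolding t_def by auto
        have "\<bar>t^2*k0*(nu0* s - R*th)\<bar> \<le> K*t" using bnd[OF t1, of s] sp w by simp
        moreover have "\<bar>t^2*k0*(nu0* s - R*th)\<bar> = t*(t*(k0*\<bar>nu0* s - R*th\<bar>))" using assms
          by (simp add: abs_mult power2_eq_square)
        ultimately have "t*(t*(k0*\<bar>nu0* s - R*th\<bar>)) \<le> t*K" by (simp add: mult.commute)
        hence A: "t*(k0*\<bar>nu0* s - R*th\<bar>) \<le> K" using t1 by simp
        have "\<bar>nu0* s - R*th\<bar> = nu0*\<bar>s - w\<bar>" using assms
          by (simp add: abs_mult right_diff_distrib[symmetric] flip: nw)
        hence A2: "t*(k0*nu0)*\<bar>s - w\<bar> \<le> K" using A by (simp add: algebra_simps)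
        have B: "\<bar>\<xi>\<bar>*(k0*nu0*e) \<ge> 2*K" using h1 assms e by (simp add: pos_divide_le_eq)
        show "dist (complex_of_real (S \<xi>)) (complex_of_real (R * th / nu0)) < e"
        proof (rule ccontr)
          assume "\<not> ?thesis"
          moreover have "dist (complex_of_real (S \<xi>)) (complex_of_real (R * th / nu0)) = \<bar>s - w\<bar>"
            by (simp only: dist_of_real dist_real_def s_def w_def)
          ultimately have ge: "\<bar>s - w\<bar> \<ge> e" by simp
          have kn: "k0*nu0 > 0" using assms by simp
          have "\<bar>\<xi>\<bar>*(k0*nu0*e) \<le> t*(k0*nu0*e)" using tx kn e by (intro mult_right_mono) auto
          also have "\<dots> \<le> t*(k0*nu0)*\<bar>s - w\<bar>"
          proof -
            have "(t*(k0*nu0))*e \<le> (t*(k0*nu0))*\<bar>s - w\<bar>" using ge kn t1 by (intro mult_left_mono) auto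
            thus ?thesis by (simp add: mult.assoc)
          qed
          finally show False using A2 B K by linarith
        qed
      qed
    qed
  qed
qed

end
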